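(* Let $q\ge 2$, $n\ge 1$ and $h\in F(n,q)$. Then $\kappa^{\min}(h)\le \mathrm{pw}(\mathrm{IG}^*(h))$.
   Context: Let $q\ge 2$, $A=\{0,1,\dots,q-1\}$, $[n]=\{1,\dots,n\}$, and let $F(n,q)$ be the set of all maps $A^n\to A^n$. For $f\in F(m,q)$ and $i\in[m]$, $f_i$ is the $i$-th coordinate function and $f^i(x)=(x_1,\dots,x_{i-1},f_i(x),x_{i+1},\dots,x_m)$; for a word $w=(w_1,\dots,w_t)$ over $[m]$, $f^w=f^{w_t}\circ\cdots\circ f^{w_1}$. $\Pi([m])$ is the set of permutations of $[m]$ written as words $(w_1,\dots,w_m)$. $\mathrm{pr}_{[n]}:A^m\to A^n$ is the projection onto the first $n$ coordinates. For $m\ge n$, $(f,w)$ with $f\in F(m,q)$, $w\in\Pi([m])$ sequentializes $h\in F(n,q)$ if $\mathrm{pr}_{[n]}\circ f^w=h\circ\mathrm{pr}_{[n]}$. $\kappa^{\min}(h)$ is the smallest $k\ge 0$ such that there exist $f\in F(n+k,q)$ and $w\in\Pi([n+k])$ with $(f,w)$ sequentializing $h$. The interaction graph $\mathrm{IG}(h)$ is the directed graph on $[n]$ with an arc $(i,j)$ iff there exist $x,y\in A^n$ with $x_\ell=y_\ell$ for all $\ell\ne i$ and $h_j(x)\ne h_j(y)$; $\mathrm{IG}^*(h)$ is its undirected version ($\{i,j\}$ is an edge, possibly a loop, iff $(i,j)$ or $(j,i)$ is an arc). A path decomposition of an undirected graph $G=(V,E)$ is a sequence $X_1,\dots,X_p$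 of subsets of $V$ such that every vertex lies in some $X_a$, every edge has both endpoints in some common $X_a$, and if $v\in X_a\cap X_b$ with $a<b$ then $v\in X_c$ for all $c\in[a,b]$. Its size is $\max_a|X_a|-1$, and the pathwidth $\mathrm{pw}(G)$ is the minimum size of a path decomposition of $G$. *)

theory Defs
  imports "HOL-Library.FuncSet"
begin

text \<open>Configurations in A^n, A = {0..q-1}, coordinates indexed by [n] = {1..n},
  represented extensionally (undefined outside [n]).\<close>
definition states :: "nat \<Rightarrow> nat \<Rightarrow> (nat \<Rightarrow> nat) set" where
  "states q n = PiE {1..n} (\<lambda>_. {..<q})"

text \<open>F(n,q): maps A^n \<rightarrow> A^n (only their values on A^n matter).\<close>
definition Fmaps :: "nat \<Rightarrow> nat \<Rightarrow> ((nat \<Rightarrow> nat) \<Rightarrow> (nat \<Rightarrow> nat)) set" where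
  "Fmaps q n = {h. \<forall>x\<in>states q n. h x \<in> states q n}"

definition upd :: "((nat \<Rightarrow> nat) \<Rightarrow> (nat \<Rightarrow> nat)) \<Rightarrow> nat \<Rightarrow> (nat \<Rightarrow> nat) \<Rightarrow> (nat \<Rightarrow> nat)" where
  "upd f i x = x(i := f x i)"

text \<open>f^w = f^{w_t} o ... o f^{w_1} (w_1 applied first).\<close>
definition seq_apply :: "((nat \<Rightarrow> nat) \<Rightarrow> (nat \<Rightarrow> nat)) \<Rightarrow> nat list \<Rightarrow> (nat \<Rightarrow> nat) \<Rightarrow> (nat \<Rightarrow> nat)" where
  "seq_apply f w = fold (\<lambda>i. upd f i) w"

definition pr :: "nat \<Rightarrow> (nat \<Rightarrow> nat) \<Rightarrow> (nat \<Rightarrow> nat)" where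
  "pr n x = restrict x {1..n}"

definition perm_word :: "nat \<Rightarrow> nat list \<Rightarrow> bool" where
  "perm_word m w \<longleftrightarrow> distinct w \<and> set w = {1..m}"

definition sequentializes ::
  "nat \<Rightarrow> nat \<Rightarrow> nat \<Rightarrow> ((nat \<Rightarrow> nat) \<Rightarrow> (nat \<Rightarrow> nat)) \<Rightarrow> nat list
     \<Rightarrow> ((nat \<Rightarrow> nat) \<Rightarrow> (nat \<Rightarrow> nat)) \<Rightarrow> bool" where
  "sequentializes q n m f w h \<longleftrightarrow>
     n \<le> m \<and> f \<in> Fmaps q m \<and> perm_word m w \<and>
     (\<forall>x\<in>states q m. pr n (seq_apply f w x) = h (pr n x))"

definition kappa_min :: "nat \<Rightarrow> nat \<Rightarrow> ((nat \<Rightarrow> nat) \<Rightarrow> (nat \<Rightarrow> nat)) \<Rightarrow> nat" where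
  "kappa_min q n h = (LEAST k. \<exists>f w. sequentializes q n (n + k) f w h)"

definition IG_arc :: "nat \<Rightarrow> nat \<Rightarrow> ((nat \<Rightarrow> nat) \<Rightarrow> (nat \<Rightarrow> nat)) \<Rightarrow> nat \<Rightarrow> nat \<Rightarrow> bool" where
  "IG_arc q n h i j \<longleftrightarrow> i \<in> {1..n} \<and> j \<in> {1..n} \<and>
     (\<exists>x\<in>states q n. \<exists>y\<in>states q n. (\<forall>l\<in>{1..n}. l \<noteq> i \<longrightarrow> x l = y l) \<and> h x j \<noteq> h y j)"

text \<open>Edges of IG*(h) as sets {i,j} (a loop is the singleton {i}); vertex set is [n].\<close>
definition IG_star_edges :: "nat \<Rightarrow> nat \<Rightarrow> ((nat \<Rightarrow> nat) \<Rightarrow> (nat \<Rightarrow> nat)) \<Rightarrow> nat set set" where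
  "IG_star_edges q n h = {{i, j} | i j. IG_arc q n h i j \<or> IG_arc q n h j i}"

definition path_decomp :: "'a set \<Rightarrow> 'a set set \<Rightarrow> 'a set list \<Rightarrow> bool" where
  "path_decomp V E Xs \<longleftrightarrow>
     (\<forall>X\<in>set Xs. X \<subseteq> V) \<and>
     (\<forall>v\<in>V. \<exists>X\<in>set Xs. v \<in> X) \<and>
     (\<forall>e\<in>E. \<exists>X\<in>set Xs. e \<subseteq> X) \<and>
     (\<forall>a b c v. a \<le> c \<and> c \<le> b \<and> b < length Xs \<and> v \<in> Xs ! a \<and> v \<in> Xs ! b \<longrightarrow> v \<in> Xs ! c)"

definition pathwidth :: "'a set \<Rightarrow> 'a set set \<Rightarrow> nat" where
  "pathwidth V E = (LEAST k. \<exists>Xs. path_decomp V E Xs \<and> (\<forall>X\<in>set Xs. card X \<le> k + 1))"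

end

theory Submission
  imports Defs
begin


lemma greedy_color:
  fixes S :: "nat set" and r :: "nat \<Rightarrow> nat" and conf :: "nat \<Rightarrow> nat \<Rightarrow> bool"
  assumes fin: "finite S" and cr: "\<And>v u. conf v u \<Longrightarrow> r v < r u"
    and bd: "\<And>v. v \<in> S \<Longrightarrow> card {u\<in>S. u = v \<or> conf v u} \<le> k"
  shows "\<exists>col. \<forall>v\<in>S. col v \<in> {1..k} \<and> (\<forall>u\<in>S. conf v u \<longrightarrow> col v \<noteq> col u)"
  using fin bd
proof (induction S rule: finite_ranking_induct[where f = "\<lambda>x. - int (r x)"])
  case empty
  then show ?case by simp
next
  case (insert x S)
  show ?case
  proof (cases "x \<in> S")
    case True
    then show ?thesis using insert by (simp add: insert_absorb)
  next
    case False
    have bdS: "\<And>v. v \<in> S \<Longrightarrow> card {u\<in>S. u = v \<or> conf v u} \<le> k"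
    proof -
      fix v assume "v \<in> S"
      have "card {u\<in>S. u = v \<or> conf v u} \<le> card {u\<in>insert x S. u = v \<or> conf v u}"
        by (rule card_mono) (use insert in auto)
      also have "\<dots> \<le> k" using insert.prems \<open>v \<in> S\<close> by auto
      finally show "card {u\<in>S. u = v \<or> conf v u} \<le> k" .
    qed
    obtain col where col: "\<forall>v\<in>S. col v \<in> {1..k} \<and> (\<forall>u\<in>S. conf v u \<longrightarrow> col v \<noteq> col u)"
      using insert.IH bdS by blast
    have nx: "\<not> conf x x" using cr by blast
    have eq: "{u\<in>insert x S. u = x \<or> conf x u} = insert x {u\<in>S. conf x u}" by auto
    have "card (insert x {u\<in>S. conf x u}) \<le> k" using insert.prems eq by (metis insertI1)
    moreover have "card (insert x {u\<in>S. conf x u}) = Suc (card {u\<in>S. conf x u})"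
      using False insert.hyps(1) by simp
    ultimately have c1: "card {u\<in>S. conf x u} < k" by simp
    have "card (col ` {u\<in>S. conf x u}) < card {1..k}"
      using card_image_le[of "{u\<in>S. conf x u}" col] insert.hyps(1) c1 by simp
    then have "\<not> {1..k} \<subseteq> col ` {u\<in>S. conf x u}"
    proof (intro notI)
      assume sub: "{1..k} \<subseteq> col ` {u\<in>S. conf x u}"
      have "card {1..k} \<le> card (col ` {u\<in>S. conf x u})"
        by (rule card_mono) (use insert.hyps(1) sub in auto)
      with \<open>card (col ` {u\<in>S. conf x u}) < card {1..k}\<close> show False by simp
    qed
    then obtain c where c: "c \<in> {1..k}" "c \<notin> col ` {u\<in>S. conf x u}" by blast
    have le: "\<And>y. y \<in> S \<Longrightarrow> r x \<le> r y" using insert.hyps(2) by force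
    show ?thesis
    proof (intro exI[of _ "col(x := c)"] ballI conjI impI)
      fix v assume v: "v \<in> insert x S"
      then show "(col(x := c)) v \<in> {1..k}" using col c by auto
      fix u assume u: "u \<in> insert x S" and cf: "conf v u"
      show "(col(x := c)) v \<noteq> (col(x := c)) u"
      proof (cases "v = x")
        case True
        then have "u \<noteq> x" using nx cf by auto
        then show ?thesis using True c u cf by auto
      next
        case vx: False
        then have vS: "v \<in> S" using v by auto
        show ?thesis
        proof (cases "u = x")
          case True
          then show ?thesis using cr[OF cf] le[OF vS] by simp
        next
          case False
          then show ?thesis using vx col vS u cf by auto
        qed
      qed
    qed
  qed
qed

lemma states_upd:
  assumes "x \<in> states q n" "i \<in> {1..n}" "v < q"
  shows "x(i := v) \<in> states q n"
  using assms unfolding states_def by (auto simp: PiE_iff extensional_def)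

lemma dep:
  assumes x: "x \<in> states q n" and y: "y \<in> states q n" and u: "u \<in> {1..n}"
    and agr: "\<forall>i\<in>{1..n}. IG_arc q n h i u \<longrightarrow> x i = y i"
  shows "h x u = h y u"
  using x agr
proof (induction "card {i\<in>{1..n}. x i \<noteq> y i}" arbitrary: x rule: less_induct)
  case less
  show ?case
  proof (cases "{i\<in>{1..n}. x i \<noteq> y i} = {}")
    case True
    have "x = y"
    proof
      fix i show "x i = y i"
      proof (cases "i \<in> {1..n}")
        case True then show ?thesis using \<open>{i\<in>{1..n}. x i \<noteq> y i} = {}\<close> by auto
      next
        case False then show ?thesis using less.prems(1) y unfolding states_def
          by (auto simp: PiE_iff extensional_def)
      qed
    qed
    then show ?thesis by simp
  next
    case False
    then obtain i where i: "i \<in> {1..n}" "x i \<noteq> y i" by auto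
    have yi: "y i < q" using y i(1) unfolding states_def by (auto simp: PiE_iff)
    define x' where "x' = x(i := y i)"
    have x': "x' \<in> states q n" unfolding x'_def by (rule states_upd[OF less.prems(1) i(1) yi])
    have nar: "\<not> IG_arc q n h i u" using less.prems(2) i by auto
    have agree: "\<forall>l\<in>{1..n}. l \<noteq> i \<longrightarrow> x l = x' l" by (simp add: x'_def)
    have "h x u = h x' u"
    proof (rule ccontr)
      assume "h x u \<noteq> h x' u"
      then have "IG_arc q n h i u" unfolding IG_arc_def using i(1) u less.prems(1) x' agree by blast
      then show False using nar by simp
    qed
    moreover have "h x' u = h y u"
    proof (rule less.hyps)
      show "card {j\<in>{1..n}. x' j \<noteq> y j} < card {j\<in>{1..n}. x j \<noteq> y j}"
        by (rule psubset_card_mono) (use i in \<open>auto simp: x'_def split: if_splits\<close>)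
      show "x' \<in> states q n" by (rule x')
      show "\<forall>j\<in>{1..n}. IG_arc q n h j u \<longrightarrow> x' j = y j"
        using less.prems(2) by (auto simp: x'_def)
    qed
    ultimately show ?thesis by simp
  qed
qed

lemma fold_sim:
  assumes "distinct (ps @ xs)"
    and "\<forall>i<length xs. f (\<lambda>c. if c \<in> set ps \<union> set (take i xs) then val c else x c) (xs!i) = val (xs!i)"
  shows "fold (\<lambda>i. upd f i) xs (\<lambda>c. if c \<in> set ps then val c else x c)
       = (\<lambda>c. if c \<in> set ps \<union> set xs then val c else x c)"
  using assms
proof (induction xs arbitrary: ps)
  case Nil
  then show ?case by simp
next
  case (Cons a xs)
  have h0: "f (\<lambda>c. if c \<in> set ps then val c else x c) a = val a"
    using Cons.prems(2) by (erule_tac x=0 in allE) simp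
  have st: "upd f a (\<lambda>c. if c \<in> set ps then val c else x c) = (\<lambda>c. if c \<in> set (ps @ [a]) then val c else x c)"
    unfolding upd_def using h0 by (auto simp: fun_eq_iff)
  have "fold (\<lambda>i. upd f i) xs (\<lambda>c. if c \<in> set (ps @ [a]) then val c else x c)
       = (\<lambda>c. if c \<in> set (ps @ [a]) \<union> set xs then val c else x c)"
  proof (rule Cons.IH)
    show "distinct ((ps @ [a]) @ xs)" using Cons.prems(1) by simp
    show "\<forall>i<length xs. f (\<lambda>c. if c \<in> set (ps @ [a]) \<union> set (take i xs) then val c else x c) (xs ! i) = val (xs ! i)"
    proof (intro allI impI)
      fix i assume "i < length xs"
      have "f (\<lambda>c. if c \<in> set ps \<union> set (take (Suc i) (a # xs)) then val c else x c) ((a#xs) ! Suc i) = val ((a#xs) ! Suc i)"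
      proof -
        have sl: "Suc i < length (a # xs)" using \<open>i < length xs\<close> by simp
        show ?thesis using Cons.prems(2) sl by blast
      qed
      moreover have "(\<lambda>c. if c \<in> set (ps @ [a]) \<union> set (take i xs) then val c else x c) = (\<lambda>c. if c \<in> set ps \<union> set (take (Suc i) (a # xs)) then val c else x c)"
        by (auto simp: fun_eq_iff)
      ultimately show "f (\<lambda>c. if c \<in> set (ps @ [a]) \<union> set (take i xs) then val c else x c) (xs ! i) = val (xs ! i)"
        by simp
    qed
  qed
  moreover have "(\<lambda>c. if c \<in> set (ps @ [a]) \<union> set xs then val c else x c) = (\<lambda>c. if c \<in> set ps \<union> set (a # xs) then val c else x c)"
    by (auto simp: fun_eq_iff)
  ultimately show ?case using st by simp
qed

lemma pr_states:
  assumes "y \<in> states q m" "n \<le> m"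
  shows "pr n y \<in> states q n"
  using assms unfolding states_def pr_def by (auto simp: PiE_iff)

lemma sorted_take_set:
  fixes r :: "nat \<Rightarrow> nat"
  assumes inj: "inj_on r (set xs)" and d: "distinct xs" and so: "sorted (map r xs)" and i: "i < length xs"
  shows "set (take i xs) = {u \<in> set xs. r u < r (xs!i)}"
proof
  show "set (take i xs) \<subseteq> {u \<in> set xs. r u < r (xs!i)}"
  proof
    fix u assume "u \<in> set (take i xs)"
    then obtain j where j: "j < i" "u = xs!j" using i by (auto simp: in_set_conv_nth)
    have "r (xs!j) \<le> r (xs!i)" using sorted_nth_mono[OF so, of j i] j i by simp
    moreover have "xs!j \<noteq> xs!i" using d j i by (simp add: nth_eq_iff_index_eq)
    moreover have "xs!j \<in> set xs" "xs!i \<in> set xs" using j i by auto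
    ultimately have "r (xs!j) < r (xs!i)" using inj by (metis inj_on_eq_iff order_le_less)
    then show "u \<in> {u \<in> set xs. r u < r (xs!i)}" using j i by auto
  qed
next
  show "{u \<in> set xs. r u < r (xs!i)} \<subseteq> set (take i xs)"
  proof
    fix u assume u: "u \<in> {u \<in> set xs. r u < r (xs!i)}"
    then obtain j where j: "j < length xs" "u = xs!j" by (auto simp: in_set_conv_nth)
    have "j < i"
    proof (rule ccontr)
      assume "\<not> j < i"
      then have "r (xs!i) \<le> r (xs!j)" using sorted_nth_mono[OF so, of i j] j by simp
      then show False using u j by simp
    qed
    then show "u \<in> set (take i xs)" using j i by (auto simp: in_set_conv_nth)
  qed
qed



lemma construct:
  fixes q n k :: nat and h :: "(nat \<Rightarrow> nat) \<Rightarrow> (nat \<Rightarrow> nat)" and Xs :: "nat set list"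
  assumes q: "q \<ge> 2" and hF: "h \<in> Fmaps q n"
    and pd: "path_decomp {1..n} (IG_star_edges q n h) Xs"
    and cardX: "\<forall>X\<in>set Xs. card X \<le> k + 1"
  shows "\<exists>f w. sequentializes q n (n + k) f w h"
proof -
  have p1: "\<forall>X\<in>set Xs. X \<subseteq> {1..n}"
    using pd unfolding path_decomp_def by (elim conjE) assumption
  have p2: "\<forall>v\<in>{1..n}. \<exists>X\<in>set Xs. v \<in> X"
    using pd unfolding path_decomp_def by (elim conjE) assumption
  have p3: "\<forall>e\<in>IG_star_edges q n h. \<exists>X\<in>set Xs. e \<subseteq> X"
    using pd unfolding path_decomp_def by (elim conjE) assumption
  have p4: "\<forall>a b c v. a \<le> c \<and> c \<le> b \<and> b < length Xs \<and> v \<in> Xs ! a \<and> v \<in> Xs ! b \<longrightarrow> v \<in> Xs ! c"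
    using pd unfolding path_decomp_def by (elim conjE) assumption
  have sub: "\<And>X. X \<in> set Xs \<Longrightarrow> X \<subseteq> {1..n}" using p1 by (rule bspec)
  have cov: "\<And>v. v \<in> {1..n} \<Longrightarrow> \<exists>X\<in>set Xs. v \<in> X" using p2 by (rule bspec)
  have edg: "\<And>e. e \<in> IG_star_edges q n h \<Longrightarrow> \<exists>X\<in>set Xs. e \<subseteq> X" using p3 by (rule bspec)
  have cvx: "\<And>a b c v. a \<le> c \<Longrightarrow> c \<le> b \<Longrightarrow> b < length Xs \<Longrightarrow> v \<in> Xs ! a \<Longrightarrow> v \<in> Xs ! b \<Longrightarrow> v \<in> Xs ! c"
    using p4 by blast
  have arcn: "\<And>i j. IG_arc q n h i j \<Longrightarrow> i \<in> {1..n} \<and> j \<in> {1..n}" unfolding IG_arc_def by blast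
  define L where "L v = Max {a. a < length Xs \<and> v \<in> Xs!a}" for v
  have Lp: "L v < length Xs \<and> v \<in> Xs ! L v" if vn: "v \<in> {1..n}" for v
  proof -
    obtain X where "X \<in> set Xs" "v \<in> X" using cov[OF vn] by blast
    then obtain a where a: "a < length Xs" "v \<in> Xs!a" by (auto simp: in_set_conv_nth)
    have "L v \<in> {a. a < length Xs \<and> v \<in> Xs!a}" unfolding L_def
      by (rule Max_in) (use a in auto)
    then show ?thesis by simp
  qed
  have Lmax: "a \<le> L v" if "a < length Xs" "v \<in> Xs!a" for a v
    unfolding L_def by (rule Max_ge) (use that in auto)
  define r where "r v = L v * (n + 1) + v" for v
  have rmod: "r v mod (n+1) = v" if "v \<in> {1..n}" for v
  proof -
    have "r v mod (n+1) = (v + L v * (n+1)) mod (n+1)" by (simp add: r_def add.commute)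
    also have "\<dots> = v mod (n+1)" by (rule mod_mult_self1)
    also have "\<dots> = v" using that by simp
    finally show ?thesis .
  qed
  have rinj: "u = v" if "u \<in> {1..n}" "v \<in> {1..n}" "r u = r v" for u v
    using rmod[OF that(1)] rmod[OF that(2)] that(3) by metis
  have rL: "L u \<le> L v" if "u \<in> {1..n}" "v \<in> {1..n}" "r u < r v" for u v
  proof (rule ccontr)
    assume "\<not> L u \<le> L v"
    then have "(L v + 1) * (n+1) \<le> L u * (n+1)" by (intro mult_le_mono1) simp
    moreover have "L u * (n+1) \<le> r u" by (simp add: r_def)
    moreover have "r v \<le> L v * (n+1) + n" using that(2) by (simp add: r_def)
    moreover have "(L v + 1) * (n+1) = L v * (n+1) + n + 1" by simp
    ultimately show False using that(3) by linarith
  qed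
  define needy where "needy v \<longleftrightarrow> (\<exists>w. IG_arc q n h w v \<and> r w < r v)" for v
  define conf where "conf v u \<longleftrightarrow> needy v \<and> r v < r u \<and> (\<exists>w. IG_arc q n h w u \<and> r w < r v)" for v u
  have clique: "card {u\<in>{1..n}. (u = z \<or> r z < r u) \<and> (\<exists>w. IG_arc q n h w u \<and> r w < r z)} \<le> k"
    if z: "z \<in> {1..n}" for z
  proof -
    define Cov where "Cov = {u\<in>{1..n}. (u = z \<or> r z < r u) \<and> (\<exists>w. IG_arc q n h w u \<and> r w < r z)}"
    have finC: "finite Cov" unfolding Cov_def by simp
    show ?thesis unfolding Cov_def[symmetric]
    proof (cases "Cov = {}")
      case True
      then show "card Cov \<le> k" by simp
    next
      case False
      define W where "W u = (SOME w. IG_arc q n h w u \<and> r w < r z)" for u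
      have W: "IG_arc q n h (W u) u \<and> r (W u) < r z" if "u \<in> Cov" for u
      proof -
        have "\<exists>w. IG_arc q n h w u \<and> r w < r z" using that unfolding Cov_def by blast
        then show ?thesis unfolding W_def by (rule someI_ex)
      qed
      have Wn: "W u \<in> {1..n}" if "u \<in> Cov" for u using W[OF that] arcn by blast
      define \<beta> where "\<beta> = Max ((\<lambda>u. L (W u)) ` Cov)"
      have "\<beta> \<in> (\<lambda>u. L (W u)) ` Cov" unfolding \<beta>_def by (rule Max_in) (use finC False in auto)
      then obtain us where us: "us \<in> Cov" "\<beta> = L (W us)" by blast
      have bmax: "L (W u) \<le> \<beta>" if "u \<in> Cov" for u
        unfolding \<beta>_def by (rule Max_ge) (use finC that in auto)
      define ws where "ws = W us"
      have wsn: "ws \<in> {1..n}" using Wn[OF us(1)] ws_def by simp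
      have bl: "\<beta> < length Xs" and wsb: "ws \<in> Xs ! \<beta>" using Lp[OF wsn] us(2) ws_def by auto
      have bz: "\<beta> \<le> L z" using rL[OF wsn z] W[OF us(1)] us(2) ws_def by simp
      have CovX: "Cov \<subseteq> Xs ! \<beta>"
      proof
        fix u assume u: "u \<in> Cov"
        have un: "u \<in> {1..n}" using u unfolding Cov_def by blast
        have "{W u, u} \<in> IG_star_edges q n h" unfolding IG_star_edges_def using W[OF u] by blast
        then obtain X where X: "X \<in> set Xs" "{W u, u} \<subseteq> X" using edg by blast
        then obtain c where c: "c < length Xs" "Xs ! c = X" by (auto simp: in_set_conv_nth)
        have c1: "c \<le> L (W u)" using Lmax[of c "W u"] c X by auto
        have zu: "L z \<le> L u"
        proof (cases "u = z")
          case True then show ?thesis by simp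
        next
          case False then have "r z < r u" using u unfolding Cov_def by blast
          then show ?thesis using rL[OF z un] by simp
        qed
        show "u \<in> Xs ! \<beta>"
        proof (rule cvx[of c \<beta> "L u"])
          show "c \<le> \<beta>" using c1 bmax[OF u] by simp
          show "\<beta> \<le> L u" using bz zu by simp
          show "L u < length Xs" using Lp[OF un] by simp
          show "u \<in> Xs ! c" using c X by auto
          show "u \<in> Xs ! L u" using Lp[OF un] by simp
        qed
      qed
      have wsC: "ws \<notin> Cov"
      proof
        assume "ws \<in> Cov"
        then have "ws = z \<or> r z < r ws" unfolding Cov_def by blast
        then show False using W[OF us(1)] ws_def by auto
      qed
      have XbS: "Xs ! \<beta> \<in> set Xs" using bl by simp
      have finXb: "finite (Xs ! \<beta>)" using sub[OF XbS] by (rule finite_subset) simp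
      have "card (insert ws Cov) \<le> card (Xs ! \<beta>)"
        by (rule card_mono[OF finXb]) (use CovX wsb in auto)
      also have "\<dots> \<le> k + 1" using cardX XbS by blast
      finally have "card Cov + 1 \<le> k + 1" using finC wsC by simp
      then show "card Cov \<le> k" by simp
    qed
  qed
  have "\<exists>col. \<forall>v\<in>{v\<in>{1..n}. needy v}. col v \<in> {1..k} \<and> (\<forall>u\<in>{v\<in>{1..n}. needy v}. conf v u \<longrightarrow> col v \<noteq> col u)"
  proof (rule greedy_color)
    show "finite {v\<in>{1..n}. needy v}" by simp
    show "\<And>v u. conf v u \<Longrightarrow> r v < r u" unfolding conf_def by blast
    fix v assume v: "v \<in> {v\<in>{1..n}. needy v}"
    have "card {u\<in>{v\<in>{1..n}. needy v}. u = v \<or> conf v u}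
       \<le> card {u\<in>{1..n}. (u = v \<or> r v < r u) \<and> (\<exists>w. IG_arc q n h w u \<and> r w < r v)}"
      by (rule card_mono) (use v in \<open>auto simp: conf_def needy_def\<close>)
    also have "\<dots> \<le> k" using clique v by auto
    finally show "card {u\<in>{v\<in>{1..n}. needy v}. u = v \<or> conf v u} \<le> k" .
  qed
  then obtain col where col: "\<And>v. v \<in> {1..n} \<Longrightarrow> needy v \<Longrightarrow> col v \<in> {1..k}"
    "\<And>v u. v \<in> {1..n} \<Longrightarrow> needy v \<Longrightarrow> u \<in> {1..n} \<Longrightarrow> needy u \<Longrightarrow> conf v u \<Longrightarrow> col v \<noteq> col u"
    by auto
  have qpos: "q > 0" using q by simp
  have hst: "h z \<in> states q n" if "z \<in> states q n" for z using hF that unfolding Fmaps_def by blast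
  have hlt: "h z c < q" if "z \<in> states q n" "c \<in> {1..n}" for z c
    using hst[OF that(1)] that(2) unfolding states_def by (auto simp: PiE_iff)
  define C where "C j = {u \<in> {1..n}. needy u \<and> col u = j}" for j
  define \<sigma> where "\<sigma> = sort_key r [1..<Suc n]"
  define w where "w = [Suc n..<Suc (n+k)] @ \<sigma>"
  define f where "f y = restrict (\<lambda>c. if c \<le> n then (if needy c then nat ((int (y (n + col c)) - (\<Sum>u\<in>C (col c) - {c}. int (if r u < r c then y u else h (pr n y) u))) mod int q) else h (pr n y) c) else (\<Sum>u\<in>C (c - n). h (pr n y) u) mod q) {1..n+k}" for y
  have setS: "set \<sigma> = {1..n}" unfolding \<sigma>_def by auto
  have distS: "distinct \<sigma>" unfolding \<sigma>_def by simp
  have sortS: "sorted (map r \<sigma>)" unfolding \<sigma>_def by simp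
  have lenS: "length \<sigma> = n" unfolding \<sigma>_def by simp
  have injS: "inj_on r (set \<sigma>)" unfolding setS using rinj by (auto simp: inj_on_def)
  have distW: "distinct w" unfolding w_def using distS setS by auto
  have setW: "set w = {1..n+k}" unfolding w_def using setS by auto
  have perm: "perm_word (n + k) w" unfolding perm_word_def using distW setW by simp
  have fF: "f \<in> Fmaps q (n + k)"
    unfolding Fmaps_def
  proof (intro CollectI ballI)
    fix y assume y: "y \<in> states q (n + k)"
    have py: "pr n y \<in> states q n" by (rule pr_states[OF y]) simp
    show "f y \<in> states q (n + k)"
      unfolding f_def states_def restrict_PiE_iff
    proof
      fix c assume c: "c \<in> {1..n+k}"
      show "(if c \<le> n then (if needy c then nat ((int (y (n + col c)) - (\<Sum>u\<in>C (col c) - {c}. int (if r u < r c then y u else h (pr n y) u))) mod int q) else h (pr n y) c) else (\<Sum>u\<in>C (c - n). h (pr n y) u) mod q) \<in> {..<q}"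
      proof (cases "c \<le> n")
        case True
        show ?thesis
        proof (cases "needy c")
          case True
          define z where "z = (int (y (n + col c)) - (\<Sum>u\<in>C (col c) - {c}. int (if r u < r c then y u else h (pr n y) u))) mod int q"
          have "0 \<le> z" "z < int q" unfolding z_def using qpos by simp_all
          then have "nat z < q" by linarith
          then show ?thesis using True \<open>c \<le> n\<close> by (simp add: z_def)
        next
          case False
          have "h (pr n y) c < q" using hlt[OF py] c True by simp
          then show ?thesis using False True by simp
        qed
      next
        case False
        then show ?thesis using qpos by simp
      qed
    qed
  qed
  have sim: "pr n (seq_apply f w x) = h (pr n x)" if x: "x \<in> states q (n + k)" for x
  proof -
    define px where "px = pr n x"
    have px: "px \<in> states q n" unfolding px_def by (rule pr_states[OF x]) simp
    have xlt: "x c < q" if "c \<in> {1..n}" for c using x that unfolding states_def by (auto simp: PiE_iff)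
    define val where "val c = (if c \<le> n then h px c else (\<Sum>u\<in>C (c - n). h px u) mod q)" for c
    have step: "f (\<lambda>c. if c \<in> set [] \<union> set (take i w) then val c else x c) (w!i) = val (w!i)"
      if i: "i < length w" for i
    proof -
      define y where "y = (\<lambda>c. if c \<in> set [] \<union> set (take i w) then val c else x c)"
      have lenU: "length [Suc n..<Suc (n+k)] = k" by simp
      show ?thesis unfolding y_def[symmetric]
      proof (cases "i < k")
        case True
        have wi: "w ! i = Suc n + i" unfolding w_def using True by (simp add: nth_append; arith)
        have tk: "take i w = [Suc n..<Suc n + i]" unfolding w_def using True by (simp add: take_append)
        have "pr n y = px" unfolding pr_def px_def y_def tk by (intro restrict_ext) auto
        then show "f y (w ! i) = val (w ! i)" unfolding wi f_def val_def using True by simp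
      next
        case False
        define j0 where "j0 = i - k"
        have j0: "j0 < length \<sigma>" using i False lenU unfolding w_def j0_def by (simp del: upt_Suc)
        define v where "v = \<sigma> ! j0"
        have wi: "w ! i = v" unfolding w_def v_def j0_def using False lenU by (simp add: nth_append del: upt_Suc)
        have vn: "v \<in> {1..n}" using j0 setS unfolding v_def by (metis nth_mem)
        have tk: "take i w = [Suc n..<Suc (n+k)] @ take j0 \<sigma>" unfolding w_def j0_def using False lenU by (simp add: take_append del: upt_Suc)
        have tks: "set (take j0 \<sigma>) = {u \<in> {1..n}. r u < r v}"
          using sorted_take_set[OF injS distS sortS j0] setS unfolding v_def by simp
        have yv: "y c = (if r c < r v then h px c else x c)" if "c \<in> {1..n}" for c
          using that tks unfolding y_def tk val_def by auto
        have yr: "y (n + j) = val (n + j)" if "j \<in> {1..k}" for j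
          using that unfolding y_def tk by auto
        have pyn: "pr n y \<in> states q n" unfolding pr_def states_def restrict_PiE_iff
        proof
          fix c assume c: "c \<in> {1..n}"
          show "y c \<in> {..<q}" using yv[OF c] hlt[OF px c] xlt[OF c] by simp
        qed
        have agree: "h (pr n y) u = h px u"
          if un: "u \<in> {1..n}" and nb: "\<And>a. IG_arc q n h a u \<Longrightarrow> \<not> r a < r v" for u
        proof (rule dep[OF pyn px un])
          show "\<forall>a\<in>{1..n}. IG_arc q n h a u \<longrightarrow> pr n y a = px a"
            using yv nb unfolding pr_def px_def by auto
        qed
        have fv: "f y v = (if needy v then nat ((int (y (n + col v)) - (\<Sum>u\<in>C (col v) - {v}. int (if r u < r v then y u else h (pr n y) u))) mod int q) else h (pr n y) v)"
          unfolding f_def using vn by simp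
        have "f y v = h px v"
        proof (cases "needy v")
          case False
          have "h (pr n y) v = h px v"
            by (rule agree[OF vn]) (use False in \<open>auto simp: needy_def\<close>)
          then show ?thesis using fv False by simp
        next
          case True
          define jj where "jj = col v"
          have jj: "jj \<in> {1..k}" using col(1)[OF vn True] jj_def by simp
          have vC: "v \<in> C jj" unfolding C_def jj_def using vn True by simp
          have finC: "finite (C jj)" unfolding C_def by simp
          have g: "(if r u < r v then y u else h (pr n y) u) = h px u" if u: "u \<in> C jj - {v}" for u
          proof -
            have un: "u \<in> {1..n}" and nu: "needy u" and cu: "col u = jj" using u unfolding C_def by auto
            show ?thesis
            proof (cases "r u < r v")
              case True then show ?thesis using yv[OF un] by simp
            next
              case False
              have "u \<noteq> v" using u by simp
              then have vu: "r v < r u" using False rinj[OF un vn] by (meson linorder_neqE_nat)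
              have "h (pr n y) u = h px u"
              proof (rule agree[OF un])
                fix a assume a: "IG_arc q n h a u"
                show "\<not> r a < r v"
                proof
                  assume "r a < r v"
                  then have "conf v u" unfolding conf_def using True vu a by blast
                  then show False using col(2)[OF vn True un nu] cu jj_def by simp
                qed
              qed
              then show ?thesis using False by simp
            qed
          qed
          have sumg: "(\<Sum>u\<in>C jj - {v}. int (if r u < r v then y u else h (pr n y) u)) = (\<Sum>u\<in>C jj - {v}. int (h px u))"
            by (rule sum.cong) (use g in auto)
          have yj: "y (n + jj) = (\<Sum>u\<in>C jj. h px u) mod q" using yr[OF jj] jj unfolding val_def by simp
          define A where "A = (\<Sum>u\<in>C jj - {v}. int (h px u))"
          have sumC: "int (\<Sum>u\<in>C jj. h px u) = int (h px v) + A"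
            unfolding A_def using sum.remove[OF finC vC, of "\<lambda>u. int (h px u)"] by (simp add: of_nat_sum)
          have "int (y (n + jj)) = (int (h px v) + A) mod int q" using yj sumC by (metis of_nat_mod)
          then have "(int (y (n + jj)) - A) mod int q = int (h px v) mod int q"
            by (simp add: mod_diff_left_eq)
          also have "\<dots> = int (h px v)" using hlt[OF px vn] by simp
          finally have "nat ((int (y (n + jj)) - A) mod int q) = h px v" by simp
          then show ?thesis using fv True sumg unfolding A_def jj_def by simp
        qed
        then show "f y (w ! i) = val (w ! i)" unfolding wi val_def using vn by simp
      qed
    qed
    have fs: "fold (\<lambda>i. upd f i) w (\<lambda>c. if c \<in> set [] then val c else x c)
       = (\<lambda>c. if c \<in> set [] \<union> set w then val c else x c)"
      by (rule fold_sim) (use distW step in auto)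
    have "seq_apply f w x = (\<lambda>c. if c \<in> set w then val c else x c)"
      using fs unfolding seq_apply_def by simp
    then have "pr n (seq_apply f w x) = restrict (h px) {1..n}"
      unfolding pr_def using setW by (intro restrict_ext) (auto simp: val_def)
    also have "\<dots> = h px" using hst[OF px] unfolding states_def by (rule PiE_restrict)
    finally show ?thesis unfolding px_def .
  qed
  have "sequentializes q n (n + k) f w h"
    unfolding sequentializes_def using fF perm sim by simp
  then show ?thesis by blast
qed


theorem mainTheorem12:
  fixes q n :: nat and h :: "(nat \<Rightarrow> nat) \<Rightarrow> (nat \<Rightarrow> nat)"
  assumes "q \<ge> 2" and "n \<ge> 1" and "h \<in> Fmaps q n"
  shows "kappa_min q n h \<le> pathwidth {1..n} (IG_star_edges q n h)"
proof -
  define E where "E = IG_star_edges q n h"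
  define P where "P = pathwidth {1..n} E"
  have Esub: "\<forall>e\<in>E. e \<subseteq> {1..n}" unfolding E_def IG_star_edges_def IG_arc_def by blast
  have pd1: "path_decomp {1..n} E [{1..n}]" unfolding path_decomp_def using Esub by auto
  have ex: "\<exists>k Xs. path_decomp {1..n} E Xs \<and> (\<forall>X\<in>set Xs. card X \<le> k + 1)"
    using pd1 by (intro exI[of _ n] exI[of _ "[{1..n}]"]) simp
  have "\<exists>Xs. path_decomp {1..n} E Xs \<and> (\<forall>X\<in>set Xs. card X \<le> P + 1)"
    unfolding P_def pathwidth_def by (rule LeastI_ex) (use ex in blast)
  then obtain Xs where Xs: "path_decomp {1..n} E Xs" "\<forall>X\<in>set Xs. card X \<le> P + 1" by blast
  have "\<exists>f w. sequentializes q n (n + P) f w h"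
    by (rule construct[OF assms(1) assms(3)]) (use Xs in \<open>auto simp: E_def\<close>)
  then have "kappa_min q n h \<le> P" unfolding kappa_min_def by (rule Least_le)
  then show ?thesis unfolding P_def E_def .
qed

end
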